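(* Let $Y_1,Y_2,\ldots$ be i.i.d. random variables with mean $0$ and variance $1$, and let $\Sigma=((\sigma_{st}))_{s,t\ge1}$ be such that there is a sequence of graphs $G_n\in\mathscr G_n$ with $|E(G_n)|\to\infty$ satisfying $\lim_{n\to\infty}\frac{1}{|E(G_n)|}\sum_{v=1}^na_{s,v}a_{v,t}=\sigma_{st}$ for each fixed $s,t\ge1$. For $K\ge1$ let $\bm Y_K=(Y_1,\ldots,Y_K)^\top$, $\Sigma_K=((\sigma_{st}))_{1\le s,t\le K}$ and $W_K:=\bm Y_K^\top\Sigma_K\bm Y_K=\sum_{1\le s,t\le K}\sigma_{st}Y_sY_t$. Then each $W_K$ is nonnegative and $W_K$ converges in $L^1$, as $K\to\infty$, to some random variable $W_\infty=:\bm Y_\infty^\top\Sigma\bm Y_\infty$.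
   Context: $\mathscr G_n$: simple undirected graphs on $\{1,\ldots,n\}$ labeled so that degrees satisfy $d_1\ge\cdots\ge d_n$; $A(G_n)=((a_{u,v}))$ is the adjacency matrix and $E(G_n)$ the edge set. *)

theory Defs
  imports "HOL-Probability.Probability"
begin

definition simple_graph_on :: "nat \<Rightarrow> (nat \<Rightarrow> nat \<Rightarrow> bool) \<Rightarrow> bool" where
  "simple_graph_on n E \<longleftrightarrow>
     (\<forall>u v. E u v \<longrightarrow> u \<in> {1..n} \<and> v \<in> {1..n}) \<and>
     (\<forall>u v. E u v \<longrightarrow> E v u) \<and>
     (\<forall>u. \<not> E u u)"

definition degree :: "nat \<Rightarrow> (nat \<Rightarrow> nat \<Rightarrow> bool) \<Rightarrow> nat \<Rightarrow> nat" where
  "degree n E u = card {v \<in> {1..n}. E u v}"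

definition graph_class :: "nat \<Rightarrow> (nat \<Rightarrow> nat \<Rightarrow> bool) \<Rightarrow> bool" where
  "graph_class n E \<longleftrightarrow> simple_graph_on n E \<and>
     (\<forall>u w. 1 \<le> u \<longrightarrow> u \<le> w \<longrightarrow> w \<le> n \<longrightarrow> degree n E w \<le> degree n E u)"

text \<open>Adjacency matrix entries a_{u,v} (0 outside {1..n}).\<close>
definition adj :: "(nat \<Rightarrow> nat \<Rightarrow> bool) \<Rightarrow> nat \<Rightarrow> nat \<Rightarrow> real" where
  "adj E u v = (if E u v then 1 else 0)"

definition num_edges :: "nat \<Rightarrow> (nat \<Rightarrow> nat \<Rightarrow> bool) \<Rightarrow> nat" where
  "num_edges n E = card {(u, v). u \<in> {1..n} \<and> v \<in> {1..n} \<and> u < v \<and> E u v}"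

end

theory Submission
  imports Defs
begin


lemma L1_complete:
  fixes s :: "nat \<Rightarrow> 'a \<Rightarrow> real"
  assumes int: "\<And>n. integrable M (s n)"
    and C: "\<And>e. e > 0 \<Longrightarrow> \<exists>N. \<forall>i\<ge>N. \<forall>j\<ge>N. (\<integral>x. \<bar>s i x - s j x\<bar> \<partial>M) < e"
  shows "\<exists>f. integrable M f \<and> (\<lambda>n. \<integral>x. \<bar>s n x - f x\<bar> \<partial>M) \<longlonglongrightarrow> 0"
proof -
  have C': "\<And>e. e > 0 \<Longrightarrow> \<exists>N. \<forall>i\<ge>N. \<forall>j\<ge>N. (\<integral>x. norm (s i x - s j x) \<partial>M) < e"
    using C by (simp add: real_norm_def)
  obtain r where r: "strict_mono r" "AE x in M. Cauchy (\<lambda>i. s (r i) x)"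
    using cauchy_L1_AE_cauchy_subseq[OF int C'] by blast
  define f where "f x = lim (\<lambda>i. s (r i) x)" for x
  have sm[measurable]: "\<And>n. s n \<in> borel_measurable M" using int by auto
  have fm[measurable]: "f \<in> borel_measurable M" unfolding f_def by measurable
  have conv: "AE x in M. (\<lambda>i. s (r i) x) \<longlonglongrightarrow> f x"
    using r(2) by eventually_elim (simp add: f_def Cauchy_convergent_iff convergent_LIMSEQ_iff)
  have key: "(\<integral>\<^sup>+x. ennreal \<bar>s n x - f x\<bar> \<partial>M) \<le> ennreal e"
    if N: "\<forall>i\<ge>N. \<forall>j\<ge>N. (\<integral>x. \<bar>s i x - s j x\<bar> \<partial>M) < e" and nN: "n \<ge> N" for e n N
  proof -
    have "(\<integral>\<^sup>+x. ennreal \<bar>s n x - f x\<bar> \<partial>M) = (\<integral>\<^sup>+x. liminf (\<lambda>i. ennreal \<bar>s n x - s (r i) x\<bar>) \<partial>M)"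
    proof (rule nn_integral_cong_AE)
      show "AE x in M. ennreal \<bar>s n x - f x\<bar> = liminf (\<lambda>i. ennreal \<bar>s n x - s (r i) x\<bar>)"
        using conv
      proof eventually_elim
        case (elim x)
        have "(\<lambda>i. ennreal \<bar>s n x - s (r i) x\<bar>) \<longlonglongrightarrow> ennreal \<bar>s n x - f x\<bar>"
          by (intro tendsto_ennrealI tendsto_intros elim)
        from lim_imp_Liminf[OF _ this] show ?case by simp
      qed
    qed
    also have "\<dots> \<le> liminf (\<lambda>i. \<integral>\<^sup>+x. ennreal \<bar>s n x - s (r i) x\<bar> \<partial>M)"
      by (rule nn_integral_liminf) measurable
    also have "\<dots> \<le> ennreal e"
    proof (rule Liminf_le)
      show "\<forall>\<^sub>F i in sequentially. (\<integral>\<^sup>+x. ennreal \<bar>s n x - s (r i) x\<bar> \<partial>M) \<le> ennreal e"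
        unfolding eventually_sequentially
      proof (intro exI allI impI)
        fix i assume "i \<ge> N"
        then have "r i \<ge> N" using seq_suble[OF r(1), of i] by linarith
        have "(\<integral>\<^sup>+x. ennreal \<bar>s n x - s (r i) x\<bar> \<partial>M) = ennreal (\<integral>x. \<bar>s n x - s (r i) x\<bar> \<partial>M)"
          by (rule nn_integral_eq_integral) (auto intro!: int)
        also have "\<dots> \<le> ennreal e" using N nN \<open>r i \<ge> N\<close> by (intro ennreal_leI) (auto intro: less_imp_le)
        finally show "(\<integral>\<^sup>+x. ennreal \<bar>s n x - s (r i) x\<bar> \<partial>M) \<le> ennreal e" .
      qed
    qed simp
    finally show ?thesis .
  qed
  obtain N1 where N1: "\<forall>i\<ge>N1. \<forall>j\<ge>N1. (\<integral>x. \<bar>s i x - s j x\<bar> \<partial>M) < 1"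
    using C[of 1] by auto
  have "integrable M (\<lambda>x. s N1 x - f x)"
  proof (rule integrableI_bounded)
    have "(\<integral>\<^sup>+x. ennreal (norm (s N1 x - f x)) \<partial>M) \<le> ennreal 1"
      using key[OF N1, of N1] by (simp add: real_norm_def)
    then show "(\<integral>\<^sup>+x. ennreal (norm (s N1 x - f x)) \<partial>M) < \<infinity>"
      by (simp add: le_less_trans)
  qed measurable
  from Bochner_Integration.integrable_diff[OF int[of N1] this]
  have "integrable M (\<lambda>x. s N1 x - (s N1 x - f x))" .
  then have fi: "integrable M f" by (rule back_subst[where P="integrable M"]) auto
  have diffi: "\<And>n. integrable M (\<lambda>x. \<bar>s n x - f x\<bar>)"
    using int fi by auto
  have "(\<lambda>n. \<integral>x. \<bar>s n x - f x\<bar> \<partial>M) \<longlonglongrightarrow> 0"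
  proof (rule LIMSEQ_I)
    fix e :: real assume e: "e > 0"
    obtain N where N: "\<forall>i\<ge>N. \<forall>j\<ge>N. (\<integral>x. \<bar>s i x - s j x\<bar> \<partial>M) < e/2"
      using C[of "e/2"] e by auto
    show "\<exists>no. \<forall>n\<ge>no. norm ((\<integral>x. \<bar>s n x - f x\<bar> \<partial>M) - 0) < e"
    proof (intro exI allI impI)
      fix n assume "n \<ge> N"
      have "(\<integral>x. \<bar>s n x - f x\<bar> \<partial>M) = enn2real (\<integral>\<^sup>+x. ennreal \<bar>s n x - f x\<bar> \<partial>M)"
        by (rule integral_eq_nn_integral) auto
      also have "\<dots> \<le> e/2"
        using key[OF N \<open>n \<ge> N\<close>] e
        by (intro enn2real_leI) auto
      finally show "norm ((\<integral>x. \<bar>s n x - f x\<bar> \<partial>M) - 0) < e"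
        using e by simp
    qed
  qed
  with fi show ?thesis by blast
qed



lemma adj_sym: "simple_graph_on n E \<Longrightarrow> adj E u v = adj E v u"
  unfolding simple_graph_on_def adj_def by metis

lemma psd_graph:
  assumes g: "simple_graph_on n E"
  shows "0 \<le> (\<Sum>s\<in>S. \<Sum>t\<in>S. x s * x t * (\<Sum>v=1..n. adj E s v * adj E v t))"
proof -
  have "(\<Sum>s\<in>S. \<Sum>t\<in>S. x s * x t * (\<Sum>v=1..n. adj E s v * adj E v t))
      = (\<Sum>s\<in>S. \<Sum>t\<in>S. \<Sum>v=1..n. (x s * adj E s v) * (x t * adj E t v))"
  proof (intro sum.cong refl)
    fix s t
    have "x s * x t * (\<Sum>v=1..n. adj E s v * adj E v t) = (\<Sum>v=1..n. x s * x t * (adj E s v * adj E v t))"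
      by (rule sum_distrib_left)
    also have "\<dots> = (\<Sum>v=1..n. (x s * adj E s v) * (x t * adj E t v))"
      by (intro sum.cong refl) (simp add: adj_sym[OF g, of _ t] mult_ac)
    finally show "x s * x t * (\<Sum>v=1..n. adj E s v * adj E v t) = (\<Sum>v=1..n. (x s * adj E s v) * (x t * adj E t v))" .
  qed
  also have "\<dots> = (\<Sum>v=1..n. \<Sum>s\<in>S. \<Sum>t\<in>S. (x s * adj E s v) * (x t * adj E t v))"
    by (subst sum.swap, rule sum.cong[OF refl], rule sum.swap)
  also have "\<dots> = (\<Sum>v=1..n. (\<Sum>s\<in>S. x s * adj E s v) * (\<Sum>t\<in>S. x t * adj E t v))"
    by (simp add: sum_product)
  also have "\<dots> \<ge> 0"
    by (intro sum_nonneg) simp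
  finally show ?thesis .
qed

lemma trace_graph:
  assumes g: "simple_graph_on n E"
  shows "(\<Sum>s=1..K. \<Sum>v=1..n. adj E s v * adj E v s) \<le> 2 * real (num_edges n E)"
proof -
  define d where "d s = card {v\<in>{1..n}. E s v}" for s
  have row: "(\<Sum>v=1..n. adj E s v * adj E v s) = real (d s)" for s
  proof -
    have "(\<Sum>v=1..n. adj E s v * adj E v s) = (\<Sum>v=1..n. if E s v then 1 else 0)"
      using g by (intro sum.cong refl) (auto simp: adj_def simple_graph_on_def)
    also have "\<dots> = real (d s)" by (simp add: d_def sum.If_cases Int_def)
    finally show ?thesis .
  qed
  have d0: "s \<notin> {1..n} \<Longrightarrow> d s = 0" for s
    using g unfolding d_def simple_graph_on_def by auto
  have "(\<Sum>s=1..K. real (d s)) = (\<Sum>s\<in>{1..K}\<inter>{1..n}. real (d s))"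
    by (rule sum.mono_neutral_right) (auto simp: d0)
  also have "\<dots> \<le> (\<Sum>s=1..n. real (d s))"
    by (rule sum_mono2) auto
  also have "\<dots> = real (\<Sum>s=1..n. d s)" by simp
  finally have r1: "(\<Sum>s=1..K. real (d s)) \<le> real (\<Sum>s=1..n. d s)" .
  have "(\<Sum>s=1..n. d s) = card (SIGMA s:{1..n}. {v\<in>{1..n}. E s v})"
    by (simp add: card_SigmaI d_def)
  also have "(SIGMA s:{1..n}. {v\<in>{1..n}. E s v}) =
      {(u, v). u \<in> {1..n} \<and> v \<in> {1..n} \<and> u < v \<and> E u v} \<union> prod.swap ` {(u, v). u \<in> {1..n} \<and> v \<in> {1..n} \<and> u < v \<and> E u v}"
    (is "_ = ?A \<union> _")
  proof (intro set_eqI iffI)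
    fix p assume "p \<in> (SIGMA s:{1..n}. {v\<in>{1..n}. E s v})"
    then obtain u v where p: "p = (u, v)" "u \<in> {1..n}" "v \<in> {1..n}" "E u v" by auto
    have "u \<noteq> v" using g p unfolding simple_graph_on_def by auto
    then consider "u < v" | "v < u" by linarith
    then show "p \<in> ?A \<union> prod.swap ` ?A"
    proof cases
      case 1 then show ?thesis using p by auto
    next
      case 2
      have "E v u" using g p unfolding simple_graph_on_def by auto
      then have "(v, u) \<in> ?A" using p 2 by auto
      then show ?thesis using p by (auto intro!: image_eqI[of _ _ "(v,u)"])
    qed
  next
    fix p assume "p \<in> ?A \<union> prod.swap ` ?A"
    then show "p \<in> (SIGMA s:{1..n}. {v\<in>{1..n}. E s v})"
      using g unfolding simple_graph_on_def by auto
  qed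
  also have "card (?A \<union> prod.swap ` ?A) \<le> card ?A + card (prod.swap ` ?A)"
    by (rule card_Un_le)
  also have "card (prod.swap ` ?A) = card ?A"
    by (rule card_image) (simp add: inj_on_def)
  finally have nd: "(\<Sum>s=1..n. d s) \<le> 2 * card ?A" by linarith
  have "(\<Sum>s=1..K. \<Sum>v=1..n. adj E s v * adj E v s) = (\<Sum>s=1..K. real (d s))"
    using row by simp
  also have "\<dots> \<le> real (\<Sum>s=1..n. d s)" by (rule r1)
  also have "\<dots> \<le> real (2 * card ?A)" using nd by (simp only: of_nat_le_iff)
  also have "\<dots> = 2 * real (num_edges n E)" by (simp add: num_edges_def)
  finally show ?thesis .
qed



lemma double_sum_split:
  fixes g :: "nat \<Rightarrow> nat \<Rightarrow> real"
  assumes "finite A" "finite B" "A \<inter> B = {}"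
  shows "(\<Sum>s\<in>A\<union>B. \<Sum>t\<in>A\<union>B. g s t) =
    (\<Sum>s\<in>A. \<Sum>t\<in>A. g s t) + ((\<Sum>s\<in>A. \<Sum>t\<in>B. g s t) + (\<Sum>s\<in>B. \<Sum>t\<in>A. g s t)) + (\<Sum>s\<in>B. \<Sum>t\<in>B. g s t)"
  using assms by (simp add: sum.union_disjoint sum.distrib)

lemma quad_split:
  fixes \<sigma> :: "nat \<Rightarrow> nat \<Rightarrow> real" and y :: "nat \<Rightarrow> real"
  assumes fin: "finite A" "finite B" and disj: "A \<inter> B = {}"
  shows "(\<Sum>s\<in>A\<union>B. \<Sum>t\<in>A\<union>B. \<sigma> s t * ((if s\<in>A then l else 1) * y s) * ((if t\<in>A then l else 1) * y t))
    = l\<^sup>2 * (\<Sum>s\<in>A. \<Sum>t\<in>A. \<sigma> s t * y s * y t)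
      + l * ((\<Sum>s\<in>A. \<Sum>t\<in>B. \<sigma> s t * y s * y t) + (\<Sum>s\<in>B. \<Sum>t\<in>A. \<sigma> s t * y s * y t))
      + (\<Sum>s\<in>B. \<Sum>t\<in>B. \<sigma> s t * y s * y t)"
proof -
  have AB: "s \<in> B \<Longrightarrow> s \<notin> A" for s using disj by auto
  have "(\<Sum>s\<in>A. \<Sum>t\<in>A. \<sigma> s t * ((if s\<in>A then l else 1) * y s) * ((if t\<in>A then l else 1) * y t))
      = l\<^sup>2 * (\<Sum>s\<in>A. \<Sum>t\<in>A. \<sigma> s t * y s * y t)"
    by (simp add: sum_distrib_left power2_eq_square mult_ac)
  moreover have "(\<Sum>s\<in>A. \<Sum>t\<in>B. \<sigma> s t * ((if s\<in>A then l else 1) * y s) * ((if t\<in>A then l else 1) * y t))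
      = l * (\<Sum>s\<in>A. \<Sum>t\<in>B. \<sigma> s t * y s * y t)"
    by (simp add: sum_distrib_left AB mult_ac)
  moreover have "(\<Sum>s\<in>B. \<Sum>t\<in>A. \<sigma> s t * ((if s\<in>A then l else 1) * y s) * ((if t\<in>A then l else 1) * y t))
      = l * (\<Sum>s\<in>B. \<Sum>t\<in>A. \<sigma> s t * y s * y t)"
    by (simp add: sum_distrib_left AB mult_ac)
  moreover have "(\<Sum>s\<in>B. \<Sum>t\<in>B. \<sigma> s t * ((if s\<in>A then l else 1) * y s) * ((if t\<in>A then l else 1) * y t))
      = (\<Sum>s\<in>B. \<Sum>t\<in>B. \<sigma> s t * y s * y t)"
    by (simp add: AB)
  ultimately show ?thesis
    by (simp add: double_sum_split[OF assms] distrib_left)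
qed

lemma quad_bound:
  fixes \<sigma> :: "nat \<Rightarrow> nat \<Rightarrow> real" and y :: "nat \<Rightarrow> real"
  assumes fin: "finite A" "finite B" and disj: "A \<inter> B = {}"
    and psd: "\<And>x. 0 \<le> (\<Sum>s\<in>A\<union>B. \<Sum>t\<in>A\<union>B. \<sigma> s t * x s * x t)"
    and eps: "e > 0"
  shows "\<bar>(\<Sum>s\<in>A\<union>B. \<Sum>t\<in>A\<union>B. \<sigma> s t * y s * y t) - (\<Sum>s\<in>A. \<Sum>t\<in>A. \<sigma> s t * y s * y t)\<bar>
     \<le> e * (\<Sum>s\<in>A. \<Sum>t\<in>A. \<sigma> s t * y s * y t) + (1/e + 1) * (\<Sum>s\<in>B. \<Sum>t\<in>B. \<sigma> s t * y s * y t)"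
proof -
  define a where "a = (\<Sum>s\<in>A. \<Sum>t\<in>A. \<sigma> s t * y s * y t)"
  define b where "b = (\<Sum>s\<in>A. \<Sum>t\<in>B. \<sigma> s t * y s * y t) + (\<Sum>s\<in>B. \<Sum>t\<in>A. \<sigma> s t * y s * y t)"
  define c where "c = (\<Sum>s\<in>B. \<Sum>t\<in>B. \<sigma> s t * y s * y t)"
  have F: "0 \<le> l\<^sup>2 * a + l * b + c" for l
    using psd[of "\<lambda>s. (if s\<in>A then l else 1) * y s"] quad_split[OF fin disj, of \<sigma> l y]
    unfolding a_def b_def c_def by simp
  have tot: "(\<Sum>s\<in>A\<union>B. \<Sum>t\<in>A\<union>B. \<sigma> s t * y s * y t) = a + b + c"
    unfolding a_def b_def c_def by (rule double_sum_split[OF fin disj])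
  have c0: "0 \<le> c" using F[of 0] by simp
  have F1: "0 \<le> e\<^sup>2 * a + e * b + c" using F[of e] .
  have F2: "0 \<le> e\<^sup>2 * a - e * b + c" using F[of "-e"] by simp
  have "e * b \<le> e * (e * a + c / e)" using F1 F2 eps by (simp add: algebra_simps power2_eq_square)
  then have b1: "b \<le> e * a + c / e" using eps by simp
  have "- (e * b) \<le> e * (e * a + c / e)" using F1 eps by (simp add: algebra_simps power2_eq_square)
  then have b2: "- b \<le> e * a + c / e" using eps
    by (metis mult_le_cancel_left_pos mult_minus_right)
  have "\<bar>b + c\<bar> \<le> e * a + (1/e + 1) * c" using b1 b2 c0 by (simp add: algebra_simps abs_le_iff)
  then show ?thesis unfolding tot by (simp add: a_def[symmetric] c_def[symmetric])
qed



lemma abs_mult_le_sq: "\<bar>(a::real) * b\<bar> \<le> a\<^sup>2 + b\<^sup>2"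
proof -
  have "0 \<le> (\<bar>a\<bar> - \<bar>b\<bar>)\<^sup>2" by simp
  then have "2 * (\<bar>a\<bar> * \<bar>b\<bar>) \<le> \<bar>a\<bar>\<^sup>2 + \<bar>b\<bar>\<^sup>2" by (simp add: power2_eq_square algebra_simps)
  then have "2 * (\<bar>a\<bar> * \<bar>b\<bar>) \<le> a\<^sup>2 + b\<^sup>2" by simp
  moreover have "0 \<le> \<bar>a\<bar> * \<bar>b\<bar>" by simp
  ultimately show ?thesis unfolding abs_mult using zero_le_power2[of a] zero_le_power2[of b] by linarith
qed

theorem lemma3p13:
  fixes M :: "'a measure" and Y :: "nat \<Rightarrow> 'a \<Rightarrow> real"
    and \<sigma> :: "nat \<Rightarrow> nat \<Rightarrow> real" and G :: "nat \<Rightarrow> nat \<Rightarrow> nat \<Rightarrow> bool"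
  assumes M: "prob_space M"
    and rv: "\<And>i. i \<ge> 1 \<Longrightarrow> Y i \<in> borel_measurable M"
    and indep: "prob_space.indep_vars M (\<lambda>_. borel) Y {1..}"
    and ident: "\<And>i. i \<ge> 1 \<Longrightarrow> distr M borel (Y i) = distr M borel (Y 1)"
    and int1: "integrable M (Y 1)"
    and mean0: "prob_space.expectation M (Y 1) = 0"
    and int2: "integrable M (\<lambda>x. (Y 1 x)\<^sup>2)"
    and var1: "prob_space.variance M (Y 1) = 1"
    and Gn: "\<And>n. graph_class n (G n)"
    and edges: "filterlim (\<lambda>n. num_edges n (G n)) at_top sequentially"
    and sigma: "\<And>s t. s \<ge> 1 \<Longrightarrow> t \<ge> 1 \<Longrightarrow>
       (\<lambda>n. (\<Sum>v = 1..n. adj (G n) s v * adj (G n) v t) / real (num_edges n (G n)))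
         \<longlonglongrightarrow> \<sigma> s t"
  defines "W \<equiv> (\<lambda>K x. \<Sum>s = 1..K. \<Sum>t = 1..K. \<sigma> s t * Y s x * Y t x)"
  shows "(\<forall>K\<ge>1. \<forall>x\<in>space M. W K x \<ge> 0) \<and>
         (\<forall>K. integrable M (W K)) \<and>
         (\<exists>Winf. integrable M Winf \<and>
            (\<lambda>K. \<integral>x. \<bar>W K x - Winf x\<bar> \<partial>M) \<longlonglongrightarrow> 0)"
proof -
  interpret P: prob_space M by (rule M)
  have gr: "\<And>n. simple_graph_on n (G n)" using Gn by (simp add: graph_class_def)
  have Y1: "integrable M (Y i) \<and> (\<integral>x. Y i x \<partial>M) = 0" if i: "i \<ge> 1" for i
  proof -
    have "integrable (distr M borel (Y i)) (\<lambda>z. z) \<longleftrightarrow> integrable M (\<lambda>x. Y i x)"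
      by (rule integrable_distr_eq) (auto intro: rv i)
    moreover have "integrable (distr M borel (Y 1)) (\<lambda>z. z) \<longleftrightarrow> integrable M (\<lambda>x. Y 1 x)"
      by (rule integrable_distr_eq) (auto intro: rv)
    moreover have "integral\<^sup>L (distr M borel (Y i)) (\<lambda>z. z) = (\<integral>x. Y i x \<partial>M)"
      by (rule integral_distr) (auto intro: rv i)
    moreover have "integral\<^sup>L (distr M borel (Y 1)) (\<lambda>z. z) = (\<integral>x. Y 1 x \<partial>M)"
      by (rule integral_distr) (auto intro: rv)
    ultimately show ?thesis using ident[OF i] int1 mean0 by simp
  qed
  have Y2: "integrable M (\<lambda>x. (Y i x)\<^sup>2) \<and> (\<integral>x. (Y i x)\<^sup>2 \<partial>M) = 1" if i: "i \<ge> 1" for i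
  proof -
    have e2: "(\<integral>x. (Y 1 x)\<^sup>2 \<partial>M) = 1" using var1 mean0 by simp
    have "integrable (distr M borel (Y i)) (\<lambda>z. z\<^sup>2) \<longleftrightarrow> integrable M (\<lambda>x. (Y i x)\<^sup>2)"
      by (rule integrable_distr_eq) (auto intro: rv i)
    moreover have "integrable (distr M borel (Y 1)) (\<lambda>z. z\<^sup>2) \<longleftrightarrow> integrable M (\<lambda>x. (Y 1 x)\<^sup>2)"
      by (rule integrable_distr_eq) (auto intro: rv)
    moreover have "integral\<^sup>L (distr M borel (Y i)) (\<lambda>z. z\<^sup>2) = (\<integral>x. (Y i x)\<^sup>2 \<partial>M)"
      by (rule integral_distr) (auto intro: rv i)
    moreover have "integral\<^sup>L (distr M borel (Y 1)) (\<lambda>z. z\<^sup>2) = (\<integral>x. (Y 1 x)\<^sup>2 \<partial>M)"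
      by (rule integral_distr) (auto intro: rv)
    ultimately show ?thesis using ident[OF i] int2 e2 by simp
  qed
  have YY: "integrable M (\<lambda>x. Y s x * Y t x) \<and> (\<integral>x. Y s x * Y t x \<partial>M) = (if s = t then 1 else 0)"
    if s: "s \<ge> 1" and t: "t \<ge> 1" for s t
  proof
    show int: "integrable M (\<lambda>x. Y s x * Y t x)"
    proof (rule Bochner_Integration.integrable_bound)
      show "integrable M (\<lambda>x. (Y s x)\<^sup>2 + (Y t x)\<^sup>2)"
        using Y2[OF s] Y2[OF t] by auto
      show "(\<lambda>x. Y s x * Y t x) \<in> borel_measurable M" using rv[OF s] rv[OF t] by measurable
      show "AE x in M. norm (Y s x * Y t x) \<le> norm ((Y s x)\<^sup>2 + (Y t x)\<^sup>2)"
        using abs_mult_le_sq by (simp add: real_norm_def)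
    qed
    show "(\<integral>x. Y s x * Y t x \<partial>M) = (if s = t then 1 else 0)"
    proof (cases "s = t")
      case True
      then show ?thesis using Y2[OF s] by (simp add: power2_eq_square)
    next
      case False
      have ind: "P.indep_vars (\<lambda>_. borel) Y {s, t}"
        using P.indep_vars_subset[OF indep] s t by auto
      have "(\<integral>x. (\<Prod>i\<in>{s,t}. Y i x) \<partial>M) = (\<Prod>i\<in>{s,t}. \<integral>x. Y i x \<partial>M)"
        by (rule P.indep_vars_lebesgue_integral) (use ind Y1 s t in auto)
      then show ?thesis using False Y1[OF s] by simp
    qed
  qed
  have psd: "0 \<le> (\<Sum>s\<in>S. \<Sum>t\<in>S. \<sigma> s t * x s * x t)" if S: "finite S" "S \<subseteq> {1..}" for S x
  proof (rule LIMSEQ_le_const)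
    show "(\<lambda>n. \<Sum>s\<in>S. \<Sum>t\<in>S. ((\<Sum>v = 1..n. adj (G n) s v * adj (G n) v t) / real (num_edges n (G n))) * x s * x t)
        \<longlonglongrightarrow> (\<Sum>s\<in>S. \<Sum>t\<in>S. \<sigma> s t * x s * x t)"
      using S by (intro tendsto_sum tendsto_mult tendsto_const sigma) auto
    show "\<exists>N. \<forall>n\<ge>N. 0 \<le> (\<Sum>s\<in>S. \<Sum>t\<in>S. ((\<Sum>v = 1..n. adj (G n) s v * adj (G n) v t) / real (num_edges n (G n))) * x s * x t)"
    proof (intro exI allI impI)
      fix n :: nat
      have aux: "\<And>a b c d::real. a / b * c * d = c * d * a / b" by simp
      have "(\<Sum>s\<in>S. \<Sum>t\<in>S. ((\<Sum>v = 1..n. adj (G n) s v * adj (G n) v t) / real (num_edges n (G n))) * x s * x t)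
          = (\<Sum>s\<in>S. \<Sum>t\<in>S. x s * x t * (\<Sum>v = 1..n. adj (G n) s v * adj (G n) v t) / real (num_edges n (G n)))"
        by (simp only: aux)
      also have "\<dots> = (\<Sum>s\<in>S. \<Sum>t\<in>S. x s * x t * (\<Sum>v = 1..n. adj (G n) s v * adj (G n) v t)) / real (num_edges n (G n))"
        by (simp only: sum_divide_distrib)
      also have "\<dots> \<ge> 0" using psd_graph[OF gr[of n]] by simp
      finally show "0 \<le> (\<Sum>s\<in>S. \<Sum>t\<in>S. ((\<Sum>v = 1..n. adj (G n) s v * adj (G n) v t) / real (num_edges n (G n))) * x s * x t)" .
    qed
  qed
  have trace: "(\<Sum>s=1..K. \<sigma> s s) \<le> 2" for K
  proof (rule LIMSEQ_le_const2)
    show "(\<lambda>n. \<Sum>s=1..K. (\<Sum>v = 1..n. adj (G n) s v * adj (G n) v s) / real (num_edges n (G n)))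
        \<longlonglongrightarrow> (\<Sum>s=1..K. \<sigma> s s)"
      by (intro tendsto_sum sigma) auto
    show "\<exists>N. \<forall>n\<ge>N. (\<Sum>s=1..K. (\<Sum>v = 1..n. adj (G n) s v * adj (G n) v s) / real (num_edges n (G n))) \<le> 2"
    proof (intro exI allI impI)
      fix n :: nat
      have tg: "(\<Sum>s=1..K. \<Sum>v = 1..n. adj (G n) s v * adj (G n) v s) \<le> 2 * real (num_edges n (G n))"
        by (rule trace_graph[OF gr])
      have "(\<Sum>s=1..K. (\<Sum>v = 1..n. adj (G n) s v * adj (G n) v s) / real (num_edges n (G n)))
         = (\<Sum>s=1..K. \<Sum>v = 1..n. adj (G n) s v * adj (G n) v s) / real (num_edges n (G n))"
        by (simp add: sum_divide_distrib)
      also have "\<dots> \<le> 2"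
      proof (cases "num_edges n (G n) = 0")
        case True then show ?thesis by simp
      next
        case False then show ?thesis using tg by (simp add: pos_divide_le_eq)
      qed
      finally show "(\<Sum>s=1..K. (\<Sum>v = 1..n. adj (G n) s v * adj (G n) v s) / real (num_edges n (G n))) \<le> 2" .
    qed
  qed
  have diag: "0 \<le> \<sigma> s s" if "s \<ge> 1" for s
    using psd[of "{s}" "\<lambda>_. 1"] that by simp
  define T where "T K = (\<Sum>s=1..K. \<sigma> s s)" for K
  have tail: "(\<Sum>s\<in>{K<..L}. \<sigma> s s) = T L - T K" if "K \<le> L" for K L
  proof -
    have "{1..L} = {1..K} \<union> {K<..L}" using that by auto
    then have "T L = T K + (\<Sum>s\<in>{K<..L}. \<sigma> s s)"
      unfolding T_def by (simp add: sum.union_disjoint ivl_disj_int)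
    then show ?thesis by simp
  qed
  have Tmono: "T K \<le> T L" if "K \<le> L" for K L
    using tail[OF that] sum_nonneg[of "{K<..L}" "\<lambda>s. \<sigma> s s"] diag by force
  have Tnn: "0 \<le> T K" for K unfolding T_def by (rule sum_nonneg) (auto intro: diag)
  have "convergent T"
    by (rule Bseq_mono_convergent) (use Tmono Tnn trace in \<open>auto intro!: BseqI'[of _ 2] simp: T_def\<close>)
  then have TC: "Cauchy T" by (rule convergent_Cauchy)
  have qint: "integrable M (\<lambda>x. \<Sum>s\<in>S. \<Sum>t\<in>S. \<sigma> s t * Y s x * Y t x) \<and>
      (\<integral>x. (\<Sum>s\<in>S. \<Sum>t\<in>S. \<sigma> s t * Y s x * Y t x) \<partial>M) = (\<Sum>s\<in>S. \<sigma> s s)"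
    if S: "finite S" "S \<subseteq> {1..}" for S
  proof -
    have eq: "(\<lambda>x. \<Sum>s\<in>S. \<Sum>t\<in>S. \<sigma> s t * Y s x * Y t x) = (\<lambda>x. \<Sum>s\<in>S. \<Sum>t\<in>S. \<sigma> s t * (Y s x * Y t x))"
      by (simp add: mult.assoc)
    have ii: "integrable M (\<lambda>x. \<sigma> s t * (Y s x * Y t x))" if "s \<in> S" "t \<in> S" for s t
      using YY[of s t] S that by auto
    have int: "integrable M (\<lambda>x. \<Sum>s\<in>S. \<Sum>t\<in>S. \<sigma> s t * (Y s x * Y t x))"
      using ii by (intro Bochner_Integration.integrable_sum) auto
    have "(\<integral>x. (\<Sum>s\<in>S. \<Sum>t\<in>S. \<sigma> s t * (Y s x * Y t x)) \<partial>M)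
        = (\<Sum>s\<in>S. \<Sum>t\<in>S. \<sigma> s t * (\<integral>x. Y s x * Y t x \<partial>M))"
      using ii by (simp add: Bochner_Integration.integral_sum Bochner_Integration.integrable_sum)
    also have "\<dots> = (\<Sum>s\<in>S. \<Sum>t\<in>S. \<sigma> s t * (if s = t then 1 else 0))"
    proof (intro sum.cong refl)
      fix s t assume "s \<in> S" "t \<in> S"
      then have "s \<ge> 1" "t \<ge> 1" using S by auto
      then show "\<sigma> s t * (\<integral>x. Y s x * Y t x \<partial>M) = \<sigma> s t * (if s = t then 1 else 0)"
        using YY[of s t] by simp
    qed
    also have "\<dots> = (\<Sum>s\<in>S. \<sigma> s s)"
      using S by (simp add: if_distrib sum.delta cong: if_cong)
    finally show ?thesis using int unfolding eq by simp
  qed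
  have Wint: "integrable M (W K)" for K
    using qint[of "{1..K}"] unfolding W_def by auto
  have Wnn: "W K x \<ge> 0" for K x
    unfolding W_def by (rule psd) auto
  have est: "(\<integral>x. \<bar>W L x - W K x\<bar> \<partial>M) \<le> e * T K + (1/e + 1) * (T L - T K)"
    if KL: "K \<le> L" and e: "e > 0" for K L e
  proof -
    define Q where "Q x = (\<Sum>s\<in>{K<..L}. \<Sum>t\<in>{K<..L}. \<sigma> s t * Y s x * Y t x)" for x
    have AB: "{1..K} \<union> {K<..L} = {1..L}" using KL by auto
    have pw: "\<bar>W L x - W K x\<bar> \<le> e * W K x + (1/e + 1) * Q x" for x
    proof -
      have psdL: "0 \<le> (\<Sum>s\<in>{1..K} \<union> {K<..L}. \<Sum>t\<in>{1..K} \<union> {K<..L}. \<sigma> s t * z s * z t)" for z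
        unfolding AB by (rule psd) auto
      have "{1..K} \<inter> {K<..L} = {}" by auto
      with quad_bound[of "{1..K}" "{K<..L}" \<sigma> e "\<lambda>s. Y s x", OF _ _ _ psdL e]
      show ?thesis unfolding AB W_def Q_def by auto
    qed
    have Qi: "integrable M Q \<and> integral\<^sup>L M Q = T L - T K"
    proof -
      have "{K<..L} \<subseteq> {1..}" by auto
      then show ?thesis using qint[of "{K<..L}"] tail[OF KL] unfolding Q_def by auto
    qed
    have "(\<integral>x. \<bar>W L x - W K x\<bar> \<partial>M) \<le> (\<integral>x. e * W K x + (1/e + 1) * Q x \<partial>M)"
      by (rule integral_mono) (use Wint Qi pw in auto)
    also have "\<dots> = e * (\<integral>x. W K x \<partial>M) + (1/e + 1) * integral\<^sup>L M Q"
      using Wint Qi by simp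
    also have "(\<integral>x. W K x \<partial>M) = T K"
      using qint[of "{1..K}"] unfolding W_def T_def by auto
    finally show ?thesis using Qi by simp
  qed
  have cauchy: "\<exists>N. \<forall>i\<ge>N. \<forall>j\<ge>N. (\<integral>x. \<bar>W i x - W j x\<bar> \<partial>M) < e" if e: "e > 0" for e
  proof -
    define ep where "ep = e / 8"
    have ep: "ep > 0" using e by (simp add: ep_def)
    define eta where "eta = (e / 2) / (1/ep + 1)"
    have eta: "eta > 0" unfolding eta_def using e ep by (intro divide_pos_pos add_pos_pos) auto
    obtain N where N: "\<forall>m\<ge>N. \<forall>n\<ge>N. dist (T m) (T n) < eta"
      using metric_CauchyD[OF TC eta] by blast
    have one: "(\<integral>x. \<bar>W j x - W i x\<bar> \<partial>M) < e" if ij: "N \<le> i" "i \<le> j" for i j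
    proof -
      have "(\<integral>x. \<bar>W j x - W i x\<bar> \<partial>M) \<le> ep * T i + (1/ep + 1) * (T j - T i)"
        by (rule est) (use ij ep in auto)
      also have "ep * T i \<le> ep * 2" using trace[of i] ep unfolding T_def by simp
      also have "(1/ep + 1) * (T j - T i) \<le> (1/ep + 1) * eta"
      proof (rule mult_left_mono)
        have "\<bar>T j - T i\<bar> < eta" using N ij by (auto simp: dist_real_def)
        then show "T j - T i \<le> eta" by linarith
      qed (use ep in simp)
      also have "(1/ep + 1) * eta = e / 2"
      proof -
        have pos: "1/ep + 1 \<noteq> 0" using ep by (metis add_pos_pos divide_pos_pos less_irrefl zero_less_one)
        show ?thesis unfolding eta_def using pos by (metis nonzero_mult_div_cancel_left times_divide_eq_right)
      qed
      finally show ?thesis using e by (simp add: ep_def)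
    qed
    show ?thesis
    proof (intro exI allI impI)
      fix i j assume "N \<le> i" "N \<le> j"
      then show "(\<integral>x. \<bar>W i x - W j x\<bar> \<partial>M) < e"
        using one[of i j] one[of j i] by (cases "i \<le> j") (auto simp: abs_minus_commute)
    qed
  qed
  obtain Winf where "integrable M Winf" "(\<lambda>K. \<integral>x. \<bar>W K x - Winf x\<bar> \<partial>M) \<longlonglongrightarrow> 0"
    using L1_complete[of M W, OF Wint cauchy] by blast
  then show ?thesis using Wint Wnn by blast
qed

end
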